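(* Consider the relative dynamics described in the context with initial location $\mathbf{x}_0=(x_0,y_0)$, $\|\mathbf{x}_0\|>1$, and final time $T>0$. The straight-line trajectory obtained by holding a constant heading $\psi$ on $[0,T]$ intersects the Proximity Circle if and only if $$\phi_{\tan}+\operatorname{atan}\big(\mu\sin\psi,\ 1-\mu\cos\psi\big)<\pi\quad\text{and}\quad T>t_c,$$ where $$\phi_{\tan}=\pi-\sin^{-1}\Big(\tfrac{1}{\|\mathbf{x}_0\|}\Big)+\operatorname{atan}(y_0,x_0),$$ $$t_c=\frac{1}{v(\psi)}\Big[-(x_0\cos\phi+y_0\sin\phi)-\sqrt{1-(x_0\sin\phi-y_0\cos\phi)^2}\Big],$$ with $\phi=\operatorname{atan}(\mu\sin\psi,\ \mu\cos\psi-1)$ and $v(\psi)=\sqrt{1+\mu^2-2\mu\cos\psi}$; $t_c$ is the time needed to reach the Proximity Circle along this trajectory.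
   Context: Pursuer-fixed frame: the Evader's relative position $\mathbf{x}(t)=(x(t),y(t))\in\mathbb{R}^2$ evolves as $\dot x=\mu\cos\psi(t)-1$, $\dot y=\mu\sin\psi(t)$, $\mathbf{x}(0)=\mathbf{x}_0$, where $\mu\in(0,1)$ and $\psi$ is the Evader's heading. The Proximity Circle is $\|\mathbf{x}\|=1$. $\operatorname{atan}(a,b)$ denotes the two-argument arctangent, i.e. the polar angle of the vector $(b,a)$. The paper assumes throughout that $y\ge 0$. *)

theory Defs
  imports "HOL-Analysis.Analysis"
begin

definition atan2 :: "real \<Rightarrow> real \<Rightarrow> real" where
  "atan2 a b = Arg (Complex b a)"

text \<open>Relative position under constant heading psi (pursuer-fixed frame).\<close>
definition traj :: "real \<Rightarrow> real \<Rightarrow> real \<Rightarrow> real \<Rightarrow> real \<Rightarrow> real \<times> real" where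
  "traj \<mu> \<psi> x0 y0 t = (x0 + t * (\<mu> * cos \<psi> - 1), y0 + t * (\<mu> * sin \<psi>))"

end

theory Submission
  imports Defs
begin

lemma quad_part:
  fixes v r b w T :: real
  assumes v: "v > 0" and r: "r > 1" and bw: "b^2 + w^2 = r^2" and T: "T > 0"
  shows "(\<exists>t\<in>{0..T}. v^2 * t^2 + 2 * v * b * t + r^2 - 1 < 0) \<longleftrightarrow>
         (b < 0 \<and> w^2 < 1 \<and> T > (-b - sqrt (1 - w^2)) / v)"
proof
  assume "\<exists>t\<in>{0..T}. v^2 * t^2 + 2 * v * b * t + r^2 - 1 < 0"
  then obtain t where t: "0 \<le> t" "t \<le> T" and q: "v^2 * t^2 + 2 * v * b * t + r^2 - 1 < 0" by auto
  have sq: "(v * t + b)^2 < 1 - w^2" using q bw by (simp add: power2_eq_square algebra_simps)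
  moreover have "0 \<le> (v * t + b)^2" by simp
  ultimately have w1: "w^2 < 1" by linarith
  have "2 * v * b * t < 0" using q r t v
  proof -
    have "r^2 > 1" using r by (simp add: one_less_power)
    moreover have "v^2 * t^2 \<ge> 0" by simp
    ultimately show ?thesis using q by linarith
  qed
  hence b0: "b < 0"
  proof (rule contrapos_pp)
    assume "\<not> b < 0"
    hence "0 \<le> 2 * v * b * t" using v t by simp
    thus "\<not> 2 * v * b * t < 0" by simp
  qed
  have "\<bar>v * t + b\<bar> < sqrt (1 - w^2)" using sq by (intro real_less_rsqrt) simp
  hence "v * t > -b - sqrt (1 - w^2)" by linarith
  hence "t > (-b - sqrt (1 - w^2)) / v" using v by (simp add: divide_less_eq mult.commute)
  with t b0 w1 show "b < 0 \<and> w^2 < 1 \<and> T > (-b - sqrt (1 - w^2)) / v" by linarith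
next
  assume a: "b < 0 \<and> w^2 < 1 \<and> T > (-b - sqrt (1 - w^2)) / v"
  define t where "t = min T (-b/v)"
  have s: "sqrt (1 - w^2) > 0" using a by simp
  have t0: "0 \<le> t" "t \<le> T" using a v T by (auto simp: t_def divide_neg_pos less_imp_le)
  have "v * t \<le> -b" using v by (simp add: t_def min_def field_simps)
  moreover have "v * t > -b - sqrt (1 - w^2)"
  proof (cases "T \<le> -b/v")
    case True
    have "v * T > -b - sqrt (1 - w^2)" using a v by (simp add: pos_divide_less_eq mult.commute)
    then show ?thesis using True by (simp add: t_def)
  next
    case False then show ?thesis using v s by (simp add: t_def)
  qed
  ultimately have "\<bar>v * t + b\<bar> < sqrt (1 - w^2)" by linarith
  hence "(v * t + b)^2 < 1 - w^2"
  proof -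
    have "\<bar>v * t + b\<bar>^2 < (sqrt (1 - w^2))^2" by (rule power_strict_mono) (use \<open>\<bar>v * t + b\<bar> < sqrt (1 - w^2)\<close> in auto)
    thus ?thesis using a by simp
  qed
  hence "v^2 * t^2 + 2 * v * b * t + r^2 - 1 < 0" using bw by (simp add: power2_eq_square algebra_simps)
  thus "\<exists>t\<in>{0..T}. v^2 * t^2 + 2 * v * b * t + r^2 - 1 < 0" using t0 by auto
qed

lemma angle_part:
  fixes th al r b w :: real
  assumes th: "0 \<le> th" "th \<le> pi" and al: "0 \<le> al" "al < pi/2" and r: "r > 1"
    and c: "cos (th + al) = -b/r" and s: "sin (th + al) = w/r"
  shows "th + al < arcsin (1/r) \<longleftrightarrow> b < 0 \<and> w^2 < 1"
proof -
  let ?g = "th + al"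
  have r0: "r > 0" using r by simp
  have bc: "b = - r  *  cos ?g" using c r0 by (simp add: field_simps)
  have ws: "w = r  *  sin ?g" using s r0 by (simp add: field_simps)
  have ab: "0 < arcsin (1/r)" "arcsin (1/r) < pi/2"
    using r arcsin_less_mono[of 0 "1/r"] arcsin_less_mono[of "1/r" 1] by auto
  show ?thesis
  proof
    assume g: "?g < arcsin (1/r)"
    have g0: "0 \<le> ?g" using th al by simp
    have "cos ?g > 0" using g g0 ab by (intro cos_gt_zero_pi) auto
    hence "b < 0" using bc r0 by simp
    moreover have "sin ?g \<ge> 0" using g0 g ab by (intro sin_ge_zero) auto
    moreover have "sin ?g < 1/r"
    proof -
      have "sin ?g < sin (arcsin (1/r))" using g g0 ab by (intro sin_monotone_2pi) auto
      moreover have "sin (arcsin (1/r)) = 1/r" using r by (intro sin_arcsin) (auto simp: field_simps)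
      ultimately show ?thesis by simp
    qed
    ultimately show "b < 0 \<and> w^2 < 1" using ws r0
    proof -
      note \<open>sin ?g < 1/r\<close> \<open>sin ?g \<ge> 0\<close>
      hence "r * sin ?g < 1" "0 \<le> r * sin ?g" using r0 by (simp_all add: field_simps)
      hence "(r * sin ?g)^2 < 1^2" by (intro power_strict_mono) auto
      thus ?thesis using ws \<open>b < 0\<close> by simp
    qed
  next
    assume a: "b < 0 \<and> w^2 < 1"
    have cg: "cos ?g > 0" proof (rule ccontr)
      assume "\<not> cos ?g > 0"
      hence "0 \<le> - r * cos ?g" using r0 by (simp add: mult_nonneg_nonpos)
      thus False using a bc by simp
    qed
    have g0: "0 \<le> ?g" using th al by simp
    have glt: "?g < pi/2"
    proof (rule ccontr)
      assume "\<not> ?g < pi/2"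
      hence h: "0 \<le> ?g - pi/2" "?g - pi/2 \<le> pi" using th al by auto
      have "cos ?g = - sin (?g - pi/2)" using cos_add[of "?g - pi/2" "pi/2"] by simp
      hence "cos ?g \<le> 0" using sin_ge_zero[OF h] by simp
      thus False using cg by simp
    qed
    have sg: "0 \<le> sin ?g" using g0 glt by (intro sin_ge_zero) auto
    have "(r  *  sin ?g)^2 < 1" using a ws by simp
    hence "r  *  sin ?g < 1" by (simp only: abs_square_less_1)
    hence "sin ?g < 1/r" using r0 by (simp add: field_simps)
    hence "arcsin (sin ?g) < arcsin (1/r)" using sg r
      by (subst arcsin_less_mono) auto
    thus "?g < arcsin (1/r)" using g0 glt by (simp add: arcsin_sin)
  qed
qed

lemma cos_pos_half:
  fixes a :: real
  assumes "a \<le> pi" "cos a > 0" shows "a < pi/2"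
proof (rule ccontr)
  assume "\<not> a < pi/2"
  hence h: "0 \<le> a - pi/2" "a - pi/2 \<le> pi" using assms by auto
  have "cos a = - sin (a - pi/2)" using cos_add[of "a - pi/2" "pi/2"] by simp
  hence "cos a \<le> 0" using sin_ge_zero[OF h] by simp
  thus False using assms by simp
qed

theorem lemma5:
  fixes \<mu> \<psi> x0 y0 T :: real
  assumes "0 < \<mu>" "\<mu> < 1"
    and "y0 \<ge> 0"
    and "sin \<psi> \<ge> 0"
    and "norm (x0, y0) > 1"
    and "T > 0"
  defines "\<phi>tan \<equiv> pi - arcsin (1 / norm (x0, y0)) + atan2 y0 x0"
    and "\<phi> \<equiv> atan2 (\<mu> * sin \<psi>) (\<mu> * cos \<psi> - 1)"
    and "v \<equiv> sqrt (1 + \<mu>^2 - 2 * \<mu> * cos \<psi>)"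
  defines "tc \<equiv> (1 / v) * (- (x0 * cos \<phi> + y0 * sin \<phi>)
                  - sqrt (1 - (x0 * sin \<phi> - y0 * cos \<phi>)^2))"
  shows "(\<exists>t\<in>{0..T}. norm (traj \<mu> \<psi> x0 y0 t) < 1) \<longleftrightarrow>
         (\<phi>tan + atan2 (\<mu> * sin \<psi>) (1 - \<mu> * cos \<psi>) < pi \<and> T > tc)"
proof -
  define r where "r = norm (x0, y0)"
  define dx where "dx = \<mu> * cos \<psi> - 1"
  define dy where "dy = \<mu> * sin \<psi>"
  define b where "b = x0 * cos \<phi> + y0 * sin \<phi>"
  define w where "w = x0 * sin \<phi> - y0 * cos \<phi>"
  define th where "th = atan2 y0 x0"
  define al where "al = atan2 (\<mu> * sin \<psi>) (1 - \<mu> * cos \<psi>)"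
  have r1: "r > 1" using assms(5) by (simp add: r_def)
  have r0: "r > 0" using r1 by simp
  have rsq: "r^2 = x0^2 + y0^2" by (simp add: r_def norm_Pair)
  have dx0: "dx < 0" using assms(1,2) cos_le_one[of \<psi>] unfolding dx_def
    by (smt (verit) mult_left_le)
  have vsq0: "1 + \<mu>^2 - 2 * \<mu> * cos \<psi> = dx^2 + dy^2"
  proof -
    have "dx^2 + dy^2 = \<mu>^2 * ((sin \<psi>)^2 + (cos \<psi>)^2) + 1 - 2 * \<mu> * cos \<psi>"
      unfolding dx_def dy_def power2_eq_square by algebra
    thus ?thesis by simp
  qed
  have vdef: "v = sqrt (dx^2 + dy^2)" using vsq0 by (simp add: v_def)
  have v0: "v > 0" using vdef dx0 by (simp add: sum_power2_gt_zero_iff)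
  have vsq: "v^2 = dx^2 + dy^2" using vdef by simp
  have z0: "Complex x0 y0 \<noteq> 0" using r0 by (auto simp: r_def complex_eq_iff zero_prod_def)
  have cz0: "cmod (Complex x0 y0) = r" by (simp add: r_def norm_Pair cmod_def)
  have cth: "cos th = x0 / r" and sth: "sin th = y0 / r"
    using cos_Arg[OF z0] sin_Arg[OF z0] cz0 by (simp_all add: th_def atan2_def)
  have th0: "0 \<le> th" "th \<le> pi" using Arg_less_0[of "Complex x0 y0"] Arg_le_pi[of "Complex x0 y0"] assms(3)
    by (simp_all add: th_def atan2_def)
  have zd: "Complex dx dy \<noteq> 0" using dx0 by (auto simp: complex_eq_iff)
  have cd: "cmod (Complex dx dy) = v" by (simp add: vdef cmod_def)
  have cph: "cos \<phi> = dx / v" and sph: "sin \<phi> = dy / v"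
    using cos_Arg[OF zd] sin_Arg[OF zd] cd by (simp_all add: \<phi>_def atan2_def dx_def dy_def)
  have ze: "Complex (-dx) dy \<noteq> 0" using dx0 by (auto simp: complex_eq_iff)
  have ce: "cmod (Complex (-dx) dy) = v" by (simp add: vdef cmod_def)
  have cal: "cos al = - dx / v" and sal: "sin al = dy / v"
    using cos_Arg[OF ze] sin_Arg[OF ze] ce by (simp_all add: al_def atan2_def dx_def dy_def)
  have al0: "0 \<le> al" using Arg_less_0[of "Complex (-dx) dy"] assms(1,4)
    by (simp add: al_def atan2_def dx_def dy_def)
  have al1: "al < pi/2"
  proof (rule cos_pos_half)
    show "al \<le> pi" using Arg_le_pi by (simp add: al_def atan2_def)
    show "cos al > 0" using cal dx0 v0 by (simp add: divide_neg_pos)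
  qed
  have vc: "v * cos \<phi> = dx" "v * sin \<phi> = dy" using cph sph v0 by simp_all
  have bv: "v * b = x0 * dx + y0 * dy"
  proof -
    have "v * b = x0 * (v * cos \<phi>) + y0 * (v * sin \<phi>)" by (simp add: b_def algebra_simps)
    thus ?thesis using vc by simp
  qed
  have wv: "v * w = x0 * dy - y0 * dx"
  proof -
    have "v * w = x0 * (v * sin \<phi>) - y0 * (v * cos \<phi>)" by (simp add: w_def algebra_simps)
    thus ?thesis using vc by simp
  qed
  have bw: "b^2 + w^2 = r^2"
  proof -
    have "v^2 * (b^2 + w^2) = v^2 * r^2"
    proof -
      have "v^2 * (b^2 + w^2) = (v * b)^2 + (v * w)^2" by (simp add: power2_eq_square algebra_simps)
      also have "\<dots> = (x0^2 + y0^2) * (dx^2 + dy^2)" unfolding bv wv by (simp add: power2_eq_square algebra_simps)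
      finally show ?thesis using rsq vsq by simp
    qed
    thus ?thesis using v0 by simp
  qed
  have cg: "cos (th + al) = -b/r"
  proof -
    have "cos (th + al) = (x0 * (-dx) - y0 * dy) / (r * v)" unfolding cos_add cth sth cal sal
      using r0 v0 by (simp add: field_simps)
    also have "\<dots> = -(v * b) / (r * v)" using bv by simp
    finally show ?thesis using v0 by simp
  qed
  have sg: "sin (th + al) = w/r"
  proof -
    have "sin (th + al) = (y0 * (-dx) + x0 * dy) / (r * v)" unfolding sin_add cth sth cal sal
      using r0 v0 by (simp add: field_simps)
    also have "\<dots> = (v * w) / (r * v)" using wv by simp
    finally show ?thesis using v0 by simp
  qed
  have ang: "\<phi>tan + al < pi \<longleftrightarrow> b < 0 \<and> w^2 < 1"
  proof -
    have "\<phi>tan + al < pi \<longleftrightarrow> th + al < arcsin (1/r)"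
      by (simp add: \<phi>tan_def r_def th_def)
    also have "\<dots> \<longleftrightarrow> b < 0 \<and> w^2 < 1" by (rule angle_part[OF th0 al0 al1 r1 cg sg])
    finally show ?thesis .
  qed
  have tr: "norm (traj \<mu> \<psi> x0 y0 t) < 1 \<longleftrightarrow> v^2 * t^2 + 2 * v * b * t + r^2 - 1 < 0" for t
  proof -
    have "norm (traj \<mu> \<psi> x0 y0 t) < 1 \<longleftrightarrow> (norm (traj \<mu> \<psi> x0 y0 t))^2 < 1"
      by (simp add: abs_square_less_1)
    also have "(norm (traj \<mu> \<psi> x0 y0 t))^2 = (x0 + t * dx)^2 + (y0 + t * dy)^2"
      by (simp add: traj_def norm_Pair dx_def dy_def)
    also have "\<dots> = (dx^2 + dy^2) * t^2 + 2 * (x0 * dx + y0 * dy) * t + (x0^2 + y0^2)"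
      by (simp add: power2_eq_square algebra_simps)
    also have "\<dots> = v^2 * t^2 + 2 * v * b * t + r^2"
      using vsq bv rsq by simp
    finally show ?thesis by simp
  qed
  have tc': "tc = (-b - sqrt (1 - w^2)) / v" by (simp add: tc_def b_def w_def)
  show ?thesis
    unfolding tr tc' al_def[symmetric] ang
    using quad_part[OF v0 r1 bw assms(6)] by simp
qed
end
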